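(* Let $G=S_n$ and $H=S_b\wr S_a$ (the stabiliser of a partition of $\{1,\dots,n\}$ into $a$ blocks of size $b$), where $n=ab$, $a=b+2$ and $b\geqslant 2$. Then $b(G,H)=3$.
   Context: For a subgroup $H\leqslant G$, $H_G=\bigcap_{g\in G}H^g$ is the core of $H$, and $b(G,H)=\min\{|S| : S\subseteq G,\ \bigcap_{g\in S}H^g=H_G\}$. Equivalently here, $b(G,H)$ is the minimal number of partitions of $\{1,\dots,n\}$ into $a$ parts of size $b$ whose common stabiliser in $S_n$ is trivial. *)

theory Defs
  imports "HOL-Library.Disjoint_Sets" "HOL-Combinatorics.Permutations"
begin

definition block_partition :: "nat \<Rightarrow> nat \<Rightarrow> nat \<Rightarrow> nat set set \<Rightarrow> bool" where
  "block_partition n a b P \<longleftrightarrow>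
     partition_on {1..n} P \<and> card P = a \<and> (\<forall>B\<in>P. card B = b)"

definition stabilises :: "(nat \<Rightarrow> nat) \<Rightarrow> nat set set \<Rightarrow> bool" where
  "stabilises s P \<longleftrightarrow> (\<lambda>B. s ` B) ` P = P"

text \<open>Base size b(S_n, S_b wr S_a): least number of partitions of {1..n} into
  a blocks of size b whose common stabiliser in Sym({1..n}) is trivial.\<close>
definition base_size :: "nat \<Rightarrow> nat \<Rightarrow> nat \<Rightarrow> nat" where
  "base_size n a b = (LEAST k. \<exists>S. finite S \<and> card S = k \<and>
       (\<forall>P\<in>S. block_partition n a b P) \<and>
       (\<forall>s. s permutes {1..n} \<and> (\<forall>P\<in>S. stabilises s P) \<longrightarrow> s = id))"

end

theory Submission
  imports Defs
begin

lemma sum_pos_ex: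
  fixes m :: "'b \<Rightarrow> nat"
  assumes "(\<Sum>y\<in>B. m y) > 0"
  shows "\<exists>y\<in>B. 0 < m y"
proof (rule ccontr)
  assume "\<not> ?thesis" then have "\<forall>y\<in>B. m y = 0" by auto
  then have "(\<Sum>y\<in>B. m y) = 0" by simp
  with assms show False by simp
qed

lemma bij_upd:
  assumes "bij_betw f A B" "x \<notin> A" "y \<notin> B"
  shows "bij_betw (f(x:=y)) (insert x A) (insert y B)"
proof -
  have "bij_betw (f(x:=y)) A B = bij_betw f A B" using assms(2) by (intro bij_betw_cong) auto
  then have "bij_betw (f(x:=y)) A B" using assms(1) by simp
  then have "bij_betw (f(x:=y)) (A \<union> {x}) (B \<union> {(f(x:=y)) x})"
    using assms(2,3) by (intro notIn_Un_bij_betw) auto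
  then show ?thesis by simp
qed

lemma match2:
  fixes m :: "'a \<Rightarrow> 'b \<Rightarrow> nat"
  assumes "finite A" "finite B"
    "\<forall>x\<in>A. (\<Sum>y\<in>B. m x y) = 2" "\<forall>y\<in>B. (\<Sum>x\<in>A. m x y) = 2"
  shows "\<exists>f. bij_betw f A B \<and> (\<forall>x\<in>A. 0 < m x (f x))"
  using assms
proof (induction "card A" arbitrary: A B m rule: less_induct)
  case less
  show ?case
  proof (cases "A = {}")
    case True
    then have "B = {}" using less.prems(4) by auto
    then show ?thesis using True by (intro exI[of _ "\<lambda>_. undefined"]) (simp add: bij_betw_def)
  next
    case False
    then obtain x where xA: "x \<in> A" by auto
    have rx: "(\<Sum>y\<in>B. m x y) = 2" using less.prems(3) xA by auto
    then have "(\<Sum>y\<in>B. m x y) > 0" by simp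
    then obtain y1 where y1B: "y1 \<in> B" and my1: "0 < m x y1" using sum_pos_ex by blast
    have rx': "m x y1 + (\<Sum>y\<in>B-{y1}. m x y) = 2"
      using rx sum.remove[OF less.prems(2) y1B, where g="m x"] by simp
    have cy1: "m x y1 + (\<Sum>u\<in>A-{x}. m u y1) = 2"
      using less.prems(4) y1B sum.remove[OF less.prems(1) xA, where g="\<lambda>u. m u y1"] by simp
    define A' where "A' = A - {x}"
    define B' where "B' = B - {y1}"
    have cardA': "card A' < card A" unfolding A'_def using xA less.prems(1)
      by (meson card_Diff1_less)
    have fA': "finite A'" "finite B'" using less.prems(1,2) by (auto simp: A'_def B'_def)
    show ?thesis
    proof (cases "m x y1 = 1")
      case False
      then have m2: "m x y1 = 2" using rx' my1 by linarith
      have z1: "\<forall>y\<in>B'. m x y = 0" using rx' m2 fA'(2) unfolding B'_def by simp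
      have z2: "\<forall>u\<in>A'. m u y1 = 0" using cy1 m2 fA'(1) unfolding A'_def by simp
      have r': "\<forall>u\<in>A'. (\<Sum>y\<in>B'. m u y) = 2"
      proof
        fix u assume u: "u \<in> A'"
        have "(\<Sum>y\<in>B. m u y) = m u y1 + (\<Sum>y\<in>B'. m u y)"
          using sum.remove[OF less.prems(2) y1B, where g="m u"] unfolding B'_def by simp
        then show "(\<Sum>y\<in>B'. m u y) = 2" using z2 u less.prems(3) u unfolding A'_def by auto
      qed
      have c': "\<forall>v\<in>B'. (\<Sum>u\<in>A'. m u v) = 2"
      proof
        fix v assume v: "v \<in> B'"
        have "(\<Sum>u\<in>A. m u v) = m x v + (\<Sum>u\<in>A'. m u v)"
          using sum.remove[OF less.prems(1) xA, where g="\<lambda>u. m u v"] unfolding A'_def by simp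
        then show "(\<Sum>u\<in>A'. m u v) = 2" using z1 v less.prems(4) unfolding B'_def by auto
      qed
      obtain f where f: "bij_betw f A' B'" "\<forall>u\<in>A'. 0 < m u (f u)"
        using less.hyps[OF cardA' fA' r' c'] by blast
      have "bij_betw (f(x := y1)) A B"
      proof -
        have "bij_betw (f(x := y1)) (insert x A') (insert y1 B')"
          using f(1) by (intro bij_upd) (auto simp: A'_def B'_def)
        moreover have "insert x A' = A" "insert y1 B' = B" using xA y1B by (auto simp: A'_def B'_def)
        ultimately show ?thesis by simp
      qed
      then show ?thesis using f(2) my1 by (intro exI[of _ "f(x := y1)"]) (auto simp: A'_def)
    next
      case True
      have "(\<Sum>y\<in>B'. m x y) = 1" using rx' True unfolding B'_def by simp
      then have "(\<Sum>y\<in>B'. m x y) > 0" by simp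
      then obtain y2 where y2: "y2 \<in> B'" "0 < m x y2" using sum_pos_ex by blast
      have "(\<Sum>u\<in>A'. m u y1) = 1" using cy1 True unfolding A'_def by simp
      then have "(\<Sum>u\<in>A'. m u y1) > 0" by simp
      then obtain x' where x': "x' \<in> A'" "0 < m x' y1" using sum_pos_ex[of "\<lambda>u. m u y1"] by blast
      have mxy2: "m x y2 = 1" and z1: "\<forall>y\<in>B'-{y2}. m x y = 0"
      proof -
        have "(\<Sum>y\<in>B'. m x y) = m x y2 + (\<Sum>y\<in>B'-{y2}. m x y)"
          using sum.remove[OF fA'(2) y2(1), where g="m x"] by simp
        then have "m x y2 = 1" "(\<Sum>y\<in>B'-{y2}. m x y) = 0"
          using \<open>(\<Sum>y\<in>B'. m x y) = 1\<close> y2(2) by linarith+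
        then show "m x y2 = 1" "\<forall>y\<in>B'-{y2}. m x y = 0"
          using fA'(2) by simp_all
      qed
      have mx'y1: "m x' y1 = 1" and z2: "\<forall>u\<in>A'-{x'}. m u y1 = 0"
      proof -
        have "(\<Sum>u\<in>A'. m u y1) = m x' y1 + (\<Sum>u\<in>A'-{x'}. m u y1)"
          using sum.remove[OF fA'(1) x'(1), where g="\<lambda>u. m u y1"] by simp
        then have "m x' y1 = 1" "(\<Sum>u\<in>A'-{x'}. m u y1) = 0"
          using \<open>(\<Sum>u\<in>A'. m u y1) = 1\<close> x'(2) by linarith+
        then show "m x' y1 = 1" "\<forall>u\<in>A'-{x'}. m u y1 = 0"
          using fA'(1) by simp_all
      qed
      define m' where "m' = (\<lambda>u v. m u v + (if u = x' \<and> v = y2 then 1 else 0))"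
      have r': "\<forall>u\<in>A'. (\<Sum>y\<in>B'. m' u y) = 2"
      proof
        fix u assume u: "u \<in> A'"
        have e1: "(\<Sum>y\<in>B. m u y) = m u y1 + (\<Sum>y\<in>B'. m u y)"
          using sum.remove[OF less.prems(2) y1B, where g="m u"] unfolding B'_def by simp
        have e2: "(\<Sum>y\<in>B'. m' u y) = (\<Sum>y\<in>B'. m u y) + (\<Sum>y\<in>B'. (if u = x' \<and> y = y2 then 1 else 0))"
          unfolding m'_def by (simp add: sum.distrib)
        have e3: "(\<Sum>y\<in>B'. (if u = x' \<and> y = y2 then 1 else 0::nat)) = (if u = x' then 1 else 0)"
          using y2(1) fA'(2) by (simp add: sum.delta)
        have "(\<Sum>y\<in>B. m u y) = 2" using u less.prems(3) unfolding A'_def by auto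
        then show "(\<Sum>y\<in>B'. m' u y) = 2" using e1 e2 e3 mx'y1 z2 u by (cases "u = x'") auto
      qed
      have c': "\<forall>v\<in>B'. (\<Sum>u\<in>A'. m' u v) = 2"
      proof
        fix v assume v: "v \<in> B'"
        have e1: "(\<Sum>u\<in>A. m u v) = m x v + (\<Sum>u\<in>A'. m u v)"
          using sum.remove[OF less.prems(1) xA, where g="\<lambda>u. m u v"] unfolding A'_def by simp
        have e2: "(\<Sum>u\<in>A'. m' u v) = (\<Sum>u\<in>A'. m u v) + (\<Sum>u\<in>A'. (if u = x' \<and> v = y2 then 1 else 0))"
          unfolding m'_def by (simp add: sum.distrib)
        have e3: "(\<Sum>u\<in>A'. (if u = x' \<and> v = y2 then 1 else 0::nat)) = (if v = y2 then 1 else 0)"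
          using x'(1) fA'(1) by (simp add: sum.delta)
        have "(\<Sum>u\<in>A. m u v) = 2" using v less.prems(4) unfolding B'_def by auto
        then show "(\<Sum>u\<in>A'. m' u v) = 2" using e1 e2 e3 mxy2 z1 v by (cases "v = y2") auto
      qed
      obtain f where f: "bij_betw f A' B'" "\<forall>u\<in>A'. 0 < m' u (f u)"
        using less.hyps[OF cardA' fA' r' c'] by blast
      have bf1: "bij_betw (f(x := y1)) A B"
      proof -
        have "bij_betw (f(x := y1)) (insert x A') (insert y1 B')"
          using f(1) by (intro bij_upd) (auto simp: A'_def B'_def)
        moreover have "insert x A' = A" "insert y1 B' = B" using xA y1B by (auto simp: A'_def B'_def)
        ultimately show ?thesis by simp
      qed
      show ?thesis
      proof (cases "0 < m x' (f x')")
        case True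
        have "\<forall>u\<in>A. 0 < m u ((f(x := y1)) u)"
        proof
          fix u assume u: "u \<in> A"
          show "0 < m u ((f(x := y1)) u)"
          proof (cases "u = x")
            case True then show ?thesis using my1 by simp
          next
            case False
            then have "u \<in> A'" using u by (simp add: A'_def)
            then show ?thesis using f(2) False True unfolding m'_def by (cases "u = x'") auto
          qed
        qed
        then show ?thesis using bf1 by blast
      next
        case False
        then have fx': "f x' = y2" using f(2) x'(1) unfolding m'_def by (auto split: if_splits)
        define g where "g = transpose y1 y2 \<circ> f(x := y1)"
        have y2B: "y2 \<in> B" "y2 \<noteq> y1" using y2(1) by (auto simp: B'_def)
        have "bij_betw g A B" unfolding g_def
          by (rule bij_betw_trans[OF bf1]) (rule permutes_imp_bij[OF permutes_swap_id[OF y1B y2B(1)]])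
        moreover have "\<forall>u\<in>A. 0 < m u (g u)"
        proof
          fix u assume u: "u \<in> A"
          show "0 < m u (g u)"
          proof (cases "u = x")
            case True then show ?thesis using mxy2 by (simp add: g_def)
          next
            case False
            then have uA': "u \<in> A'" using u by (simp add: A'_def)
            show ?thesis
            proof (cases "u = x'")
              case True then show ?thesis using False fx' mx'y1 y2B by (simp add: g_def)
            next
              case ux': False
              have "f u \<noteq> f x'" using f(1) uA' x'(1) ux' by (metis bij_betw_inv_into_left)
              moreover have "f u \<in> B'" using f(1) uA' by (meson bij_betwE)
              ultimately have "f u \<noteq> y1" "f u \<noteq> y2" using fx' by (auto simp: B'_def)
              then have "g u = f u" using False by (simp add: g_def transpose_def)
              then show ?thesis using f(2) uA' ux' unfolding m'_def by auto
            qed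
          qed
        qed
        ultimately show ?thesis by blast
      qed
    qed
  qed
qed


lemma part_props:
  assumes "block_partition n a b P"
  shows "finite P" "card P = a" "\<And>B. B\<in>P \<Longrightarrow> card B = b" "\<And>B. B\<in>P \<Longrightarrow> B \<subseteq> {1..n}"
    "\<Union>P = {1..n}" "\<And>B D x. B\<in>P \<Longrightarrow> D\<in>P \<Longrightarrow> x\<in>B \<Longrightarrow> x\<in>D \<Longrightarrow> B = D" "{} \<notin> P"
proof -
  have pp: "partition_on {1..n} P" using assms by (simp add: block_partition_def)
  show U: "\<Union>P = {1..n}" using partition_onD1[OF pp] by simp
  have "P \<subseteq> Pow {1..n}" using U by auto
  then show "finite P" by (meson finite_Pow_iff finite_atLeastAtMost finite_subset)
  show "card P = a" "\<And>B. B\<in>P \<Longrightarrow> card B = b" using assms by (auto simp: block_partition_def)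
  show "\<And>B. B\<in>P \<Longrightarrow> B \<subseteq> {1..n}" using U by auto
  show "{} \<notin> P" using partition_onD3[OF pp] .
  show "\<And>B D x. B\<in>P \<Longrightarrow> D\<in>P \<Longrightarrow> x\<in>B \<Longrightarrow> x\<in>D \<Longrightarrow> B = D"
    using partition_onD2[OF pp] unfolding disjoint_def pairwise_def disjnt_def by blast
qed

lemma card_split:
  assumes "block_partition n a b Q" "B \<subseteq> {1..n}"
  shows "card B = (\<Sum>C\<in>Q. card (B \<inter> C))"
proof -
  note Q = part_props[OF assms(1)]
  have "B = \<Union> ((\<lambda>C. B \<inter> C) ` Q)" using Q(5) assms(2) by auto
  moreover have "card (\<Union> ((\<lambda>C. B \<inter> C) ` Q)) = (\<Sum>C\<in>Q. card (B \<inter> C))"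
  proof (rule card_UN_disjoint)
    show "finite Q" by (rule Q(1))
    show "\<forall>C\<in>Q. finite (B \<inter> C)" using assms(2) by (meson finite_Int finite_atLeastAtMost finite_subset)
    show "\<forall>C\<in>Q. \<forall>D\<in>Q. C \<noteq> D \<longrightarrow> B \<inter> C \<inter> (B \<inter> D) = {}" using Q(6) by blast
  qed
  ultimately show ?thesis by simp
qed

lemma indic_card:
  assumes "finite (B::nat set)" "card B \<le> 1"
  shows "(if B = {} then 1 else 0) + card B = (1::nat)"
proof -
  have "card B = 0 \<or> card B = 1" using assms(2) by arith
  then show ?thesis using assms(1) by (auto simp: card_0_eq)
qed

lemma compl_deg:
  assumes "block_partition n a b P" "block_partition n a b Q" "a = b + 2" "B \<in> P"
    "\<forall>C\<in>Q. card (B \<inter> C) \<le> 1"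
  shows "(\<Sum>C\<in>Q. if B \<inter> C = {} then 1 else (0::nat)) = 2"
proof -
  note P = part_props[OF assms(1)] and Q = part_props[OF assms(2)]
  have Bs: "B \<subseteq> {1..n}" using P(4) assms(4) by blast
  have fB: "finite B" using Bs finite_subset by blast
  have "(\<Sum>C\<in>Q. (if B \<inter> C = {} then 1 else 0) + card (B \<inter> C)) = (\<Sum>C\<in>Q. (1::nat))"
    using indic_card assms(5) fB by (intro sum.cong) auto
  also have "\<dots> = a" using Q(2) by simp
  finally have "(\<Sum>C\<in>Q. if B \<inter> C = {} then 1 else (0::nat)) + (\<Sum>C\<in>Q. card (B \<inter> C)) = a"
    by (simp add: sum.distrib)
  moreover have "(\<Sum>C\<in>Q. card (B \<inter> C)) = b" using card_split[OF assms(2) Bs] P(3) assms(4) by simp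
  ultimately show ?thesis using assms(3) by simp
qed

lemma transp_case:
  assumes "block_partition n a b P" "block_partition n a b Q"
    "B \<in> P" "C \<in> Q" "x \<in> B \<inter> C" "y \<in> B \<inter> C" "x \<noteq> y"
  shows "\<exists>s. s permutes {1..n} \<and> stabilises s P \<and> stabilises s Q \<and> s \<noteq> id"
proof -
  note P = part_props[OF assms(1)] and Q = part_props[OF assms(2)]
  have xy: "x \<in> {1..n}" "y \<in> {1..n}" using P(4)[OF assms(3)] assms(5,6) by auto
  have "stabilises (transpose x y) P"
  proof -
    have "\<forall>D\<in>P. transpose x y ` D = D"
    proof
      fix D assume D: "D \<in> P"
      have "x \<in> D \<longleftrightarrow> y \<in> D" using P(6)[OF D assms(3)] assms(5,6) by blast
      then show "transpose x y ` D = D" by simp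
    qed
    then show ?thesis unfolding stabilises_def by simp
  qed
  moreover have "stabilises (transpose x y) Q"
  proof -
    have "\<forall>D\<in>Q. transpose x y ` D = D"
    proof
      fix D assume D: "D \<in> Q"
      have "x \<in> D \<longleftrightarrow> y \<in> D" using Q(6)[OF D assms(4)] assms(5,6) by blast
      then show "transpose x y ` D = D" by simp
    qed
    then show ?thesis unfolding stabilises_def by simp
  qed
  moreover have "transpose x y \<noteq> id" using assms(7) by (metis id_apply transpose_apply_first)
  ultimately show ?thesis using permutes_swap_id[OF xy] by blast
qed

lemma card2_third:
  assumes "finite N" "card N = 2" "x \<in> N" "y \<in> N" "z \<in> N" "x \<noteq> y"
  shows "z = x \<or> z = y"
proof (rule ccontr)
  assume "\<not> (z = x \<or> z = y)"
  then have "card {x, y, z} = 3" using assms(6) by auto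
  moreover have "card {x, y, z} \<le> card N" using assms by (intro card_mono) auto
  ultimately show False using assms(2) by simp
qed

lemma lower_cells:
  assumes bpP: "block_partition n a b P" and bpQ: "block_partition n a b Q"
    and ab: "a = b + 2" and cells: "\<forall>B\<in>P. \<forall>C\<in>Q. card (B \<inter> C) \<le> 1"
  shows "\<exists>s. s permutes {1..n} \<and> stabilises s P \<and> stabilises s Q \<and> s \<noteq> id"
proof -
  note P = part_props[OF bpP] and Q = part_props[OF bpQ]
  define m where "m = (\<lambda>(B::nat set) (C::nat set). if B \<inter> C = {} then 1 else (0::nat))"
  have rows: "\<forall>B\<in>P. (\<Sum>C\<in>Q. m B C) = 2"
    using compl_deg[OF bpP bpQ ab] cells unfolding m_def by blast
  have cols: "\<forall>C\<in>Q. (\<Sum>B\<in>P. m B C) = 2"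
  proof
    fix C assume C: "C \<in> Q"
    have "\<forall>B\<in>P. card (C \<inter> B) \<le> 1" using cells C by (simp add: Int_commute)
    then have "(\<Sum>B\<in>P. if C \<inter> B = {} then 1 else (0::nat)) = 2"
      using compl_deg[OF bpQ bpP ab C] by blast
    then show "(\<Sum>B\<in>P. m B C) = 2" unfolding m_def by (simp add: Int_commute)
  qed
  obtain f where f: "bij_betw f P Q" "\<forall>B\<in>P. 0 < m B (f B)"
    using match2[OF P(1) Q(1) rows cols] by blast
  have fdis: "\<And>B. B \<in> P \<Longrightarrow> B \<inter> f B = {}" using f(2) unfolding m_def by (auto split: if_splits)
  have fQ: "\<And>B. B \<in> P \<Longrightarrow> f B \<in> Q" using f(1) by (meson bij_betwE)
  define N where "N = (\<lambda>B. {C\<in>Q. B \<inter> C = {}})"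
  define N' where "N' = (\<lambda>C. {B\<in>P. B \<inter> C = {}})"
  have cardN: "\<And>B. B \<in> P \<Longrightarrow> card (N B) = 2"
  proof -
    fix B assume "B \<in> P"
    then have "(\<Sum>C\<in>Q. m B C) = 2" using rows by blast
    then show "card (N B) = 2" unfolding m_def N_def using Q(1) by (simp add: sum.If_cases Int_def)
  qed
  have cardN': "\<And>C. C \<in> Q \<Longrightarrow> card (N' C) = 2"
  proof -
    fix C assume "C \<in> Q"
    then have "(\<Sum>B\<in>P. m B C) = 2" using cols by blast
    then show "card (N' C) = 2" unfolding m_def N'_def using P(1) by (simp add: sum.If_cases Int_def)
  qed
  have finN': "\<And>C. finite (N' C)" unfolding N'_def using P(1) by simp
  define g where "g = (\<lambda>B. the_elem (N B - {f B}))"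
  have g: "\<And>B. B \<in> P \<Longrightarrow> g B \<in> Q \<and> B \<inter> g B = {} \<and> g B \<noteq> f B \<and> N B = {f B, g B}"
  proof -
    fix B assume B: "B \<in> P"
    have fN: "f B \<in> N B" using fdis[OF B] fQ[OF B] unfolding N_def by simp
    have "card (N B - {f B}) = 1" using cardN[OF B] fN by (simp add: card_Diff_singleton)
    then obtain C where C: "N B - {f B} = {C}" by (meson card_1_singletonE)
    then have gB: "g B = C" unfolding g_def by simp
    have "N B = {f B, C}" using C fN by auto
    moreover have "C \<in> N B" "C \<noteq> f B" using C by auto
    ultimately show "g B \<in> Q \<and> B \<inter> g B = {} \<and> g B \<noteq> f B \<and> N B = {f B, g B}"
      using gB unfolding N_def by auto
  qed
  have ginj: "inj_on g P"
  proof (rule inj_onI)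
    fix B B' assume B: "B \<in> P" and B': "B' \<in> P" and eq: "g B = g B'"
    show "B = B'"
    proof (rule ccontr)
      assume ne: "B \<noteq> B'"
      define C where "C = g B"
      have CQ: "C \<in> Q" using g[OF B] unfolding C_def by simp
      define B0 where "B0 = inv_into P f C"
      have B0: "B0 \<in> P" "f B0 = C" unfolding B0_def using f(1) CQ
        by (auto intro: bij_betw_inv_into_right inv_into_into simp: bij_betw_def)
      have "B0 \<in> N' C" using fdis[OF B0(1)] B0 unfolding N'_def by simp
      moreover have "B \<in> N' C" "B' \<in> N' C" using g[OF B] g[OF B'] B B' eq unfolding N'_def C_def by auto
      ultimately have "B0 = B \<or> B0 = B'" using card2_third[OF finN' cardN'[OF CQ]] ne by blast
      then show False using g[OF B] g[OF B'] B0 eq unfolding C_def by auto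
    qed
  qed
  have gbij: "bij_betw g P Q"
  proof -
    have "g ` P \<subseteq> Q" using g by auto
    moreover have "card (g ` P) = card Q" using card_image[OF ginj] P(2) Q(2) by simp
    ultimately have "g ` P = Q" using Q(1) by (simp add: card_subset_eq)
    then show ?thesis using ginj by (simp add: bij_betw_def)
  qed
  define gi where "gi = inv_into P g"
  have gi: "bij_betw gi Q P" unfolding gi_def using gbij by (rule bij_betw_inv_into)
  have gig: "\<And>B. B \<in> P \<Longrightarrow> gi (g B) = B" unfolding gi_def using ginj by (simp add: inv_into_f_f)
  have ggi: "\<And>C. C \<in> Q \<Longrightarrow> g (gi C) = C" unfolding gi_def using gbij
    by (simp add: bij_betw_def f_inv_into_f)
  have giP: "\<And>C. C \<in> Q \<Longrightarrow> gi C \<in> P" using gi by (meson bij_betwE)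
  have fi: "inj_on f P" using f(1) by (simp add: bij_betw_def)
  have gii: "inj_on gi Q" using gi by (simp add: bij_betw_def)
  define sg where "sg = (\<lambda>B. gi (f B))"
  define tu where "tu = (\<lambda>C. f (gi C))"
  have sgb: "bij_betw sg P P" unfolding sg_def using bij_betw_trans[OF f(1) gi] by (simp add: comp_def)
  have tub: "bij_betw tu Q Q" unfolding tu_def using bij_betw_trans[OF gi f(1)] by (simp add: comp_def)
  have sgP: "\<And>B. B \<in> P \<Longrightarrow> sg B \<in> P" using sgb by (meson bij_betwE)
  have tuQ: "\<And>C. C \<in> Q \<Longrightarrow> tu C \<in> Q" using tub by (meson bij_betwE)
  have NB: "\<And>B C. B \<in> P \<Longrightarrow> C \<in> Q \<Longrightarrow> (B \<inter> C = {}) \<longleftrightarrow> (C = f B \<or> C = g B)"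
  proof -
    fix B C assume B: "B \<in> P" and C: "C \<in> Q"
    have "(B \<inter> C = {}) \<longleftrightarrow> C \<in> N B" unfolding N_def using C by simp
    then show "(B \<inter> C = {}) \<longleftrightarrow> (C = f B \<or> C = g B)" using g[OF B] by auto
  qed
  have key: "\<And>B C. B \<in> P \<Longrightarrow> C \<in> Q \<Longrightarrow> (B \<inter> C = {}) \<longleftrightarrow> (sg B \<inter> tu C = {})"
  proof -
    fix B C assume B: "B \<in> P" and C: "C \<in> Q"
    have e1: "g (sg B) = f B" unfolding sg_def using ggi fQ[OF B] by simp
    have e2: "(tu C = f (sg B)) \<longleftrightarrow> C = f B"
    proof -
      have "(tu C = f (sg B)) \<longleftrightarrow> gi C = gi (f B)" unfolding tu_def sg_def
        using giP[OF C] giP[OF fQ[OF B]] by (simp add: inj_on_eq_iff[OF fi])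
      also have "\<dots> \<longleftrightarrow> C = f B" using C fQ[OF B] by (simp add: inj_on_eq_iff[OF gii])
      finally show ?thesis .
    qed
    have e3: "(tu C = f B) \<longleftrightarrow> C = g B"
    proof -
      have "(tu C = f B) \<longleftrightarrow> gi C = B" unfolding tu_def using giP[OF C] B by (simp add: inj_on_eq_iff[OF fi])
      also have "\<dots> \<longleftrightarrow> C = g B" using ggi[OF C] gig[OF B] by metis
      finally show ?thesis .
    qed
    have "(sg B \<inter> tu C = {}) \<longleftrightarrow> (tu C = f (sg B) \<or> tu C = g (sg B))"
      using NB[OF sgP[OF B] tuQ[OF C]] .
    also have "\<dots> \<longleftrightarrow> (C = f B \<or> C = g B)" using e1 e2 e3 by simp
    also have "\<dots> \<longleftrightarrow> (B \<inter> C = {})" using NB[OF B C] by simp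
    finally show "(B \<inter> C = {}) \<longleftrightarrow> (sg B \<inter> tu C = {})" by simp
  qed
  have sgne: "\<And>B. B \<in> P \<Longrightarrow> sg B \<noteq> B"
  proof
    fix B assume B: "B \<in> P" and eq: "sg B = B"
    have "f B = g (sg B)" unfolding sg_def using ggi fQ[OF B] by simp
    then show False using eq g[OF B] by simp
  qed
  define pb where "pb = (\<lambda>e. THE B. B \<in> P \<and> e \<in> B)"
  define qb where "qb = (\<lambda>e. THE C. C \<in> Q \<and> e \<in> C)"
  have pb: "\<And>e. e \<in> {1..n} \<Longrightarrow> pb e \<in> P \<and> e \<in> pb e"
  proof -
    fix e assume e: "e \<in> {1..n}"
    then obtain B where B: "B \<in> P" "e \<in> B" using P(5) by blast
    have "pb e = B" unfolding pb_def using B P(6) by (intro the_equality) auto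
    then show "pb e \<in> P \<and> e \<in> pb e" using B by simp
  qed
  have qb: "\<And>e. e \<in> {1..n} \<Longrightarrow> qb e \<in> Q \<and> e \<in> qb e"
  proof -
    fix e assume e: "e \<in> {1..n}"
    then obtain C where C: "C \<in> Q" "e \<in> C" using Q(5) by blast
    have "qb e = C" unfolding qb_def using C Q(6) by (intro the_equality) auto
    then show "qb e \<in> Q \<and> e \<in> qb e" using C by simp
  qed
  have pbu: "\<And>e B. e \<in> {1..n} \<Longrightarrow> B \<in> P \<Longrightarrow> e \<in> B \<Longrightarrow> pb e = B" using pb P(6) by blast
  have qbu: "\<And>e C. e \<in> {1..n} \<Longrightarrow> C \<in> Q \<Longrightarrow> e \<in> C \<Longrightarrow> qb e = C" using qb Q(6) by blast
  have finP: "\<And>B. B \<in> P \<Longrightarrow> finite B" using P(4) by (meson finite_atLeastAtMost finite_subset)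
  define s where "s = (\<lambda>e. if e \<in> {1..n} then the_elem (sg (pb e) \<inter> tu (qb e)) else e)"
  have cell: "\<And>e. e \<in> {1..n} \<Longrightarrow> \<exists>z. sg (pb e) \<inter> tu (qb e) = {z}"
  proof -
    fix e assume e: "e \<in> {1..n}"
    have "pb e \<inter> qb e \<noteq> {}" using pb[OF e] qb[OF e] by blast
    then have ne: "sg (pb e) \<inter> tu (qb e) \<noteq> {}" using key pb[OF e] qb[OF e] by blast
    have le: "card (sg (pb e) \<inter> tu (qb e)) \<le> 1" using cells sgP tuQ pb[OF e] qb[OF e] by blast
    have "finite (sg (pb e) \<inter> tu (qb e))" using finP sgP pb[OF e] by blast
    then have "card (sg (pb e) \<inter> tu (qb e)) = 1" using ne le by (simp add: card_gt_0_iff le_antisym Suc_leI)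
    then show "\<exists>z. sg (pb e) \<inter> tu (qb e) = {z}" by (meson card_1_singletonE)
  qed
  have sin: "\<And>e. e \<in> {1..n} \<Longrightarrow> s e \<in> sg (pb e) \<and> s e \<in> tu (qb e)"
  proof -
    fix e assume e: "e \<in> {1..n}"
    obtain z where z: "sg (pb e) \<inter> tu (qb e) = {z}" using cell[OF e] by blast
    then have "s e = z" unfolding s_def using e by simp
    then show "s e \<in> sg (pb e) \<and> s e \<in> tu (qb e)" using z by blast
  qed
  have sn: "\<And>e. e \<in> {1..n} \<Longrightarrow> s e \<in> {1..n}" using sin sgP pb P(4) by blast
  have sinj: "inj_on s {1..n}"
  proof (rule inj_onI)
    fix e e' assume e: "e \<in> {1..n}" and e': "e' \<in> {1..n}" and eq: "s e = s e'"
    have "sg (pb e) = sg (pb e')" using P(6)[OF sgP[OF conjunct1[OF pb[OF e]]] sgP[OF conjunct1[OF pb[OF e']]]]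
      sin[OF e] sin[OF e'] eq by metis
    then have p: "pb e = pb e'" using sgb pb[OF e] pb[OF e'] by (metis bij_betw_imp_inj_on inj_on_eq_iff)
    have "tu (qb e) = tu (qb e')" using Q(6)[OF tuQ[OF conjunct1[OF qb[OF e]]] tuQ[OF conjunct1[OF qb[OF e']]]]
      sin[OF e] sin[OF e'] eq by metis
    then have q: "qb e = qb e'" using tub qb[OF e] qb[OF e'] by (metis bij_betw_imp_inj_on inj_on_eq_iff)
    have "e \<in> pb e \<inter> qb e" "e' \<in> pb e \<inter> qb e" using pb qb e e' p q by auto
    moreover have "card (pb e \<inter> qb e) \<le> 1" using cells pb[OF e] qb[OF e] by blast
    moreover have "finite (pb e \<inter> qb e)" using finP pb[OF e] by blast
    ultimately show "e = e'" using card_le_Suc0_iff_eq by (metis One_nat_def)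
  qed
  have sperm: "s permutes {1..n}"
  proof (rule bij_imp_permutes)
    have "s ` {1..n} = {1..n}" using sn sinj by (intro endo_inj_surj) auto
    then show "bij_betw s {1..n} {1..n}" using sinj by (simp add: bij_betw_def)
    show "\<And>x. x \<notin> {1..n} \<Longrightarrow> s x = x" unfolding s_def by auto
  qed
  have imgP: "\<And>D. D \<in> P \<Longrightarrow> s ` D = sg D"
  proof -
    fix D assume D: "D \<in> P"
    have sub: "s ` D \<subseteq> sg D"
    proof
      fix z assume "z \<in> s ` D"
      then obtain e where e: "e \<in> D" "z = s e" by blast
      have en: "e \<in> {1..n}" using e P(4)[OF D] by blast
      show "z \<in> sg D" using sin[OF en] pbu[OF en D e(1)] e by simp
    qed
    have "card (s ` D) = card D" using sinj P(4)[OF D] by (meson card_image inj_on_subset)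
    also have "\<dots> = card (sg D)" using P(3) D sgP[OF D] by simp
    finally show "s ` D = sg D" using sub finP[OF sgP[OF D]] by (simp add: card_subset_eq)
  qed
  have imgQ: "\<And>D. D \<in> Q \<Longrightarrow> s ` D = tu D"
  proof -
    fix D assume D: "D \<in> Q"
    have sub: "s ` D \<subseteq> tu D"
    proof
      fix z assume "z \<in> s ` D"
      then obtain e where e: "e \<in> D" "z = s e" by blast
      have en: "e \<in> {1..n}" using e Q(4)[OF D] by blast
      show "z \<in> tu D" using sin[OF en] qbu[OF en D e(1)] e by simp
    qed
    have finQ: "\<And>B. B \<in> Q \<Longrightarrow> finite B" using Q(4) by (meson finite_atLeastAtMost finite_subset)
    have "card (s ` D) = card D" using sinj Q(4)[OF D] by (meson card_image inj_on_subset)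
    also have "\<dots> = card (tu D)" using Q(3) D tuQ[OF D] by simp
    finally show "s ` D = tu D" using sub finQ[OF tuQ[OF D]] by (simp add: card_subset_eq)
  qed
  have stP: "stabilises s P"
  proof -
    have "(\<lambda>D. s ` D) ` P = sg ` P" using imgP by (intro image_cong) auto
    also have "\<dots> = P" using sgb by (simp add: bij_betw_def)
    finally show ?thesis unfolding stabilises_def .
  qed
  have stQ: "stabilises s Q"
  proof -
    have "(\<lambda>D. s ` D) ` Q = tu ` Q" using imgQ by (intro image_cong) auto
    also have "\<dots> = Q" using tub by (simp add: bij_betw_def)
    finally show ?thesis unfolding stabilises_def .
  qed
  have "s \<noteq> id"
  proof
    assume sid: "s = id"
    have "P \<noteq> {}" using P(2) ab by auto
    then obtain D where D: "D \<in> P" by blast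
    then obtain e where e: "e \<in> D" using P(7) by (metis all_not_in_conv)
    have "s ` D = D" using sid by simp
    then have "sg D = D" using imgP[OF D] by simp
    then show False using sgne[OF D] by simp
  qed
  then show ?thesis using sperm stP stQ by blast
qed

lemma lower:
  assumes bpP: "block_partition n a b P" and bpQ: "block_partition n a b Q"
    and ab: "a = b + 2"
  shows "\<exists>s. s permutes {1..n} \<and> stabilises s P \<and> stabilises s Q \<and> s \<noteq> id"
proof (cases "\<forall>B\<in>P. \<forall>C\<in>Q. card (B \<inter> C) \<le> 1")
  case True
  then show ?thesis using lower_cells[OF bpP bpQ ab] by blast
next
  case False
  then obtain B C where BC: "B \<in> P" "C \<in> Q" "\<not> card (B \<inter> C) \<le> 1" by blast
  have fin: "finite (B \<inter> C)" using BC(3) card.infinite by force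
  then have "\<not> (\<forall>x\<in>B \<inter> C. \<forall>y\<in>B \<inter> C. x = y)" using BC(3) card_le_Suc0_iff_eq[OF fin] by simp
  then obtain x y where "x \<in> B \<inter> C" "y \<in> B \<inter> C" "x \<noteq> y" by blast
  then show ?thesis using transp_case[OF bpP bpQ BC(1,2)] by blast
qed


definition pl :: "nat \<Rightarrow> nat \<Rightarrow> nat" where "pl b x = (x - 1) div b"
definition ql :: "nat \<Rightarrow> nat \<Rightarrow> nat" where
  "ql b x = (let t = (x - 1) div b + (x - 1) mod b in if t < b + 2 then t else t - (b + 2))"
definition rl :: "nat \<Rightarrow> nat \<Rightarrow> nat" where
  "rl b x = (if x = 1 then 2 else if x = b + 1 then 0 else if x = 2 * b + 2 then 1 else (x - 1) div b)"
definition blocks :: "nat \<Rightarrow> nat \<Rightarrow> (nat \<Rightarrow> nat) \<Rightarrow> nat set set" where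
  "blocks n a L = (\<lambda>i. {x\<in>{1..n}. L x = i}) ` {..<a}"

lemma bp_blocks:
  assumes "b > 0" "\<forall>x\<in>{1..n}. L x < a" "\<forall>i<a. card {x\<in>{1..n}. L x = i} = b"
  shows "block_partition n a b (blocks n a L)"
proof -
  define F where "F = (\<lambda>i. {x\<in>{1..n}. L x = i})"
  have ne: "\<And>i. i < a \<Longrightarrow> F i \<noteq> {}" using assms(1,3) unfolding F_def by (metis card.empty less_irrefl)
  have inj: "inj_on F {..<a}"
  proof (rule inj_onI)
    fix i j assume i: "i \<in> {..<a}" and j: "j \<in> {..<a}" and eq: "F i = F j"
    obtain x where "x \<in> F i" using ne i by auto
    then show "i = j" using eq unfolding F_def by auto
  qed
  have "partition_on {1..n} (F ` {..<a})"
  proof (rule partition_onI)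
    show "\<Union> (F ` {..<a}) = {1..n}" using assms(2) unfolding F_def by auto
    show "\<And>p q. p \<in> F ` {..<a} \<Longrightarrow> q \<in> F ` {..<a} \<Longrightarrow> p \<noteq> q \<Longrightarrow> disjnt p q"
      unfolding F_def disjnt_def by auto
    show "{} \<notin> F ` {..<a}" using ne by auto
  qed
  moreover have "card (F ` {..<a}) = a" using card_image[OF inj] by simp
  moreover have "\<forall>B\<in>F ` {..<a}. card B = b" using assms(3) unfolding F_def by auto
  ultimately show ?thesis unfolding block_partition_def blocks_def F_def by simp
qed

lemma blocks_same: "B \<in> blocks n a L \<Longrightarrow> x \<in> B \<Longrightarrow> y \<in> B \<Longrightarrow> L x = L y"
  unfolding blocks_def by auto

lemma stab_pres:
  assumes "s permutes {1..n}" "stabilises s (blocks n a L)" "\<forall>x\<in>{1..n}. L x < a"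
  shows "\<forall>x\<in>{1..n}. \<forall>y\<in>{1..n}. L (s x) = L (s y) \<longleftrightarrow> L x = L y"
proof (intro ballI)
  fix x y assume x: "x \<in> {1..n}" and y: "y \<in> {1..n}"
  define Bx where "Bx = {z\<in>{1..n}. L z = L x}"
  have "Bx \<in> blocks n a L" unfolding Bx_def blocks_def using assms(3) x by auto
  then have "s ` Bx \<in> (\<lambda>B. s ` B) ` blocks n a L" by (rule imageI)
  then have "s ` Bx \<in> blocks n a L" using assms(2) unfolding stabilises_def by simp
  then obtain j where j: "s ` Bx = {z\<in>{1..n}. L z = j}" unfolding blocks_def by auto
  have "s x \<in> s ` Bx" using x unfolding Bx_def by auto
  then have Lsx: "L (s x) = j" using j by auto
  have sy: "s y \<in> {1..n}" using y permutes_in_image[OF assms(1)] by simp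
  have A: "y \<in> Bx \<longleftrightarrow> s y \<in> s ` Bx" using permutes_inj[OF assms(1)] by (rule inj_image_mem_iff[symmetric])
  have "L y = L x \<longleftrightarrow> y \<in> Bx" using y unfolding Bx_def by simp
  also have "\<dots> \<longleftrightarrow> s y \<in> s ` Bx" by (rule A)
  also have "\<dots> \<longleftrightarrow> s y \<in> {z\<in>{1..n}. L z = j}" by (simp only: j)
  also have "\<dots> \<longleftrightarrow> L (s y) = j" using sy by blast
  finally have fin: "L y = L x \<longleftrightarrow> L (s y) = j" .
  have "L (s x) = L (s y) \<longleftrightarrow> j = L (s y)" by (simp only: Lsx)
  also have "\<dots> \<longleftrightarrow> L (s y) = j" by (rule eq_commute)
  also have "\<dots> \<longleftrightarrow> L y = L x" using fin by (rule sym)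
  also have "\<dots> \<longleftrightarrow> L x = L y" by (rule eq_commute)
  finally show "L (s x) = L (s y) \<longleftrightarrow> L x = L y" .
qed

lemma nb:
  fixes b :: nat
  assumes "b \<ge> 2"
  shows "(b + 2) * b = b * b + 2 * b" "b * b \<ge> 2 * b"
proof -
  show "(b + 2) * b = b * b + 2 * b" by (simp add: algebra_simps)
  show "b * b \<ge> 2 * b" using assms by (simp add: mult_le_mono1)
qed

lemma enc_div: "k < (b::nat) \<Longrightarrow> (i * b + k) div b = i"
  by simp
lemma enc_mod: "k < (b::nat) \<Longrightarrow> (i * b + k) mod b = k"
  by simp

lemma dec:
  fixes b x :: nat
  assumes "b > 0" "x \<in> {1..(b+2)*b}"
  shows "x = ((x-1) div b) * b + (x-1) mod b + 1" "(x-1) div b < b + 2" "(x-1) mod b < b"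
proof -
  show "x = ((x-1) div b) * b + (x-1) mod b + 1" using assms(2) by (simp add: div_mult_mod_eq)
  show "(x-1) div b < b + 2" using assms(2) by (intro less_mult_imp_div_less) auto
  show "(x-1) mod b < b" using assms(1) by simp
qed

lemma enc_in:
  fixes b i k :: nat
  assumes "i < b + 2" "k < b"
  shows "i * b + k + 1 \<in> {1..(b+2)*b}"
proof -
  have "i * b + k + 1 \<le> i * b + b" using assms(2) by simp
  also have "\<dots> = (i + 1) * b" by simp
  also have "\<dots> \<le> (b + 2) * b" using assms(1) by (intro mult_le_mono1) simp
  finally show ?thesis by simp
qed

lemma pl_lt: "b > 0 \<Longrightarrow> x \<in> {1..(b+2)*b} \<Longrightarrow> pl b x < b + 2"
  unfolding pl_def using dec by blast

lemma ql_lt: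
  assumes "b > 0" "x \<in> {1..(b+2)*b}"
  shows "ql b x < b + 2"
proof -
  have "(x-1) div b < b + 2" "(x-1) mod b < b" using dec[OF assms] by auto
  then show ?thesis unfolding ql_def Let_def by auto
qed

lemma rl_lt:
  assumes "b > 0" "x \<in> {1..(b+2)*b}"
  shows "rl b x < b + 2"
proof -
  have "(x-1) div b < b + 2" using dec[OF assms] by auto
  then show ?thesis unfolding rl_def using assms(1) by auto
qed

lemma row_eq:
  assumes "b > 0" "i < b + 2"
  shows "{x\<in>{1..(b+2)*b}. pl b x = i} = {i*b+1..i*b+b}"
proof (intro set_eqI iffI)
  fix x assume x: "x \<in> {x\<in>{1..(b+2)*b}. pl b x = i}"
  then have "x = i * b + (x-1) mod b + 1" "(x-1) mod b < b" using dec[OF assms(1)] unfolding pl_def by auto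
  then show "x \<in> {i*b+1..i*b+b}" unfolding atLeastAtMost_iff by linarith
next
  fix x assume x: "x \<in> {i*b+1..i*b+b}"
  define k where "k = x - 1 - i * b"
  have k: "k < b" "x = i * b + k + 1" using x assms(1) unfolding k_def by auto
  then show "x \<in> {x\<in>{1..(b+2)*b}. pl b x = i}" using enc_in[OF assms(2) k(1)] unfolding pl_def by simp
qed

lemma card_row:
  assumes "b > 0" "i < b + 2"
  shows "card {x\<in>{1..(b+2)*b}. pl b x = i} = b"
  using row_eq[OF assms] by simp

lemma card_col:
  assumes "b > 0" "j < b + 2"
  shows "card {x\<in>{1..(b+2)*b}. ql b x = j} = b"
proof -
  define h where "h = (\<lambda>k. (if k \<le> j then j - k else j + (b+2) - k) * b + k + 1)"
  have hmod: "\<And>k. k < b \<Longrightarrow> (h k - 1) mod b = k" unfolding h_def by simp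
  have inj: "inj_on h {..<b}"
  proof (rule inj_onI)
    fix k1 k2 assume "k1 \<in> {..<b}" "k2 \<in> {..<b}" "h k1 = h k2"
    then show "k1 = k2" using hmod by (metis lessThan_iff)
  qed
  have "h ` {..<b} = {x\<in>{1..(b+2)*b}. ql b x = j}"
  proof (intro set_eqI iffI)
    fix x assume "x \<in> h ` {..<b}"
    then obtain k where k: "k < b" "x = h k" by auto
    define i where "i = (if k \<le> j then j - k else j + (b+2) - k)"
    have i: "i < b + 2" unfolding i_def using assms(2) k(1) by auto
    have x: "x = i * b + k + 1" unfolding i_def h_def k(2) by simp
    have "ql b x = j" unfolding ql_def Let_def x using k(1) i assms(2) unfolding i_def by auto
    then show "x \<in> {x\<in>{1..(b+2)*b}. ql b x = j}" using enc_in[OF i k(1)] x by simp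
  next
    fix x assume x: "x \<in> {x\<in>{1..(b+2)*b}. ql b x = j}"
    define i where "i = (x-1) div b"
    define k where "k = (x-1) mod b"
    have d: "x = i * b + k + 1" "i < b + 2" "k < b" using dec[OF assms(1)] x unfolding i_def k_def by auto
    have q: "(if i + k < b + 2 then i + k else i + k - (b + 2)) = j"
      using x unfolding ql_def Let_def i_def k_def by simp
    have "i = (if k \<le> j then j - k else j + (b+2) - k)" using q d(2,3) assms(2) by (auto split: if_splits)
    then have "x = h k" unfolding h_def using d(1) by simp
    then show "x \<in> h ` {..<b}" using d(3) by auto
  qed
  then show ?thesis using card_image[OF inj] by simp
qed

lemma pl_vals:
  fixes b :: nat assumes "b \<ge> 2"
  shows "pl b 1 = 0" "pl b (b+1) = 1" "pl b (2*b+2) = 2" "pl b 2 = 0"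
  unfolding pl_def using assms by (auto intro!: div_nat_eqI)

lemma mem_vals:
  fixes b :: nat assumes "b \<ge> 2"
  shows "1 \<in> {1..(b+2)*b}" "b+1 \<in> {1..(b+2)*b}" "2*b+2 \<in> {1..(b+2)*b}" "2 \<in> {1..(b+2)*b}"
proof -
  have h: "(b+2)*b = b*b + 2*b" "2*b \<le> b*b" using nb[OF assms] by auto
  show "1 \<in> {1..(b+2)*b}" "b+1 \<in> {1..(b+2)*b}" "2*b+2 \<in> {1..(b+2)*b}" "2 \<in> {1..(b+2)*b}"
    unfolding h(1) atLeastAtMost_iff using h(2) assms by linarith+
qed

lemma rl_pl: "rl b x = (if x = 1 then 2 else if x = b + 1 then 0 else if x = 2 * b + 2 then 1 else pl b x)"
  unfolding rl_def pl_def by simp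

lemma fib_swap:
  assumes "finite R" "u \<in> R" "v \<notin> R" "card R = b"
  shows "card (insert v (R - {u})) = b"
proof -
  have "card (R - {u}) = b - 1" using assms by (simp add: card_Diff_singleton)
  moreover have "b \<ge> 1" using assms by (metis One_nat_def Suc_leI card_gt_0_iff empty_iff)
  ultimately show ?thesis using assms by simp
qed

lemma card_rfib:
  fixes b :: nat assumes b2: "b \<ge> 2" and t: "t < b + 2"
  shows "card {x\<in>{1..(b+2)*b}. rl b x = t} = b"
proof -
  define Row where "Row = (\<lambda>i. {x\<in>{1..(b+2)*b}. pl b x = i})"
  have b0: "b > 0" using b2 by simp
  have cR: "\<And>i. i < b + 2 \<Longrightarrow> card (Row i) = b" unfolding Row_def using card_row[OF b0] by blast
  have fR: "\<And>i. finite (Row i)" unfolding Row_def by simp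
  note pv = pl_vals[OF b2] and mv = mem_vals[OF b2]
  have ne: "b + 1 \<noteq> 1" "2*b+2 \<noteq> 1" "2*b+2 \<noteq> b+1" using b2 by auto
  show ?thesis
  proof (cases "t = 0")
    case True
    have "{x\<in>{1..(b+2)*b}. rl b x = t} = insert (b+1) (Row 0 - {1})"
      unfolding Row_def rl_pl using True pv mv ne by auto
    moreover have "card (insert (b+1) (Row 0 - {1})) = b"
      by (rule fib_swap[OF fR]) (use pv mv cR[of 0] in \<open>auto simp: Row_def\<close>)
    ultimately show ?thesis by simp
  next
    case t0: False
    show ?thesis
    proof (cases "t = 1")
      case True
      have "{x\<in>{1..(b+2)*b}. rl b x = t} = insert (2*b+2) (Row 1 - {b+1})"
        unfolding Row_def rl_pl using True pv mv ne by auto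
      moreover have "card (insert (2*b+2) (Row 1 - {b+1})) = b"
        by (rule fib_swap[OF fR]) (use pv mv cR[of 1] in \<open>auto simp: Row_def\<close>)
      ultimately show ?thesis by simp
    next
      case t1: False
      show ?thesis
      proof (cases "t = 2")
        case True
        have "{x\<in>{1..(b+2)*b}. rl b x = t} = insert 1 (Row 2 - {2*b+2})"
          unfolding Row_def rl_pl using True pv mv ne by auto
        moreover have "card (insert 1 (Row 2 - {2*b+2})) = b"
          by (rule fib_swap[OF fR]) (use pv mv cR[of 2] b2 in \<open>auto simp: Row_def\<close>)
        ultimately show ?thesis by simp
      next
        case t2: False
        have "{x\<in>{1..(b+2)*b}. rl b x = t} = Row t"
          unfolding Row_def rl_pl using t0 t1 t2 pv mv ne by auto
        then show ?thesis using cR[OF t] by simp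
      qed
    qed
  qed
qed

lemma bpP:
  fixes b :: nat assumes "b \<ge> 2"
  shows "block_partition ((b+2)*b) (b+2) b (blocks ((b+2)*b) (b+2) (pl b))"
proof (rule bp_blocks)
  show b0: "0 < b" using assms by simp
  show "\<forall>x\<in>{1..(b+2)*b}. pl b x < b + 2" using pl_lt[OF b0] by blast
  show "\<forall>i<b+2. card {x\<in>{1..(b+2)*b}. pl b x = i} = b" using card_row[OF b0] by blast
qed

lemma bpQ:
  fixes b :: nat assumes "b \<ge> 2"
  shows "block_partition ((b+2)*b) (b+2) b (blocks ((b+2)*b) (b+2) (ql b))"
proof (rule bp_blocks)
  show b0: "0 < b" using assms by simp
  show "\<forall>x\<in>{1..(b+2)*b}. ql b x < b + 2" using ql_lt[OF b0] by blast
  show "\<forall>i<b+2. card {x\<in>{1..(b+2)*b}. ql b x = i} = b" using card_col[OF b0] by blast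
qed

lemma bpR:
  fixes b :: nat assumes "b \<ge> 2"
  shows "block_partition ((b+2)*b) (b+2) b (blocks ((b+2)*b) (b+2) (rl b))"
proof (rule bp_blocks)
  show b0: "0 < b" using assms by simp
  show "\<forall>x\<in>{1..(b+2)*b}. rl b x < b + 2" using rl_lt[OF b0] by blast
  show "\<forall>i<b+2. card {x\<in>{1..(b+2)*b}. rl b x = i} = b" using card_rfib[OF assms] by blast
qed


definition MM :: "nat \<Rightarrow> nat \<Rightarrow> nat \<Rightarrow> bool" where
  "MM a i j \<longleftrightarrow> (i = j+1 \<or> i = j+2 \<or> i + a = j+1 \<or> i + a = j+2)"

lemma rep_vals:
  fixes b i :: nat assumes "b > 0" "i < b + 2"
  shows "pl b (i*b+1) = i" "ql b (i*b+1) = i" "i*b+1 \<in> {1..(b+2)*b}"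
proof -
  show "pl b (i*b+1) = i" unfolding pl_def using assms by simp
  show "ql b (i*b+1) = i" unfolding ql_def Let_def using assms by simp
  show "i*b+1 \<in> {1..(b+2)*b}" using enc_in[OF assms(2), of 0] assms(1) by simp
qed

lemma inc_char:
  fixes b i j :: nat assumes b0: "b > 0" and i: "i < b + 2" and j: "j < b + 2"
  shows "(\<exists>x\<in>{1..(b+2)*b}. pl b x = i \<and> ql b x = j) \<longleftrightarrow> \<not> MM (b+2) i j"
proof
  assume "\<exists>x\<in>{1..(b+2)*b}. pl b x = i \<and> ql b x = j"
  then obtain x where x: "x \<in> {1..(b+2)*b}" "pl b x = i" "ql b x = j" by blast
  define k where "k = (x-1) mod b"
  have k: "k < b" unfolding k_def using b0 by simp
  have e1: "(x-1) div b = i" using x(2) unfolding pl_def .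
  have e2: "ql b x = (if (x-1) div b + k < b+2 then (x-1) div b + k else (x-1) div b + k - (b+2))"
    unfolding ql_def Let_def k_def by (rule refl)
  have "(if i + k < b + 2 then i + k else i + k - (b + 2)) = j"
    using x(3)[unfolded e2 e1] .
  then show "\<not> MM (b+2) i j" unfolding MM_def using k i j by (auto split: if_splits)
next
  assume nm: "\<not> MM (b+2) i j"
  define k where "k = (if i \<le> j then j - i else j + (b+2) - i)"
  have k: "k < b" using nm i j unfolding k_def MM_def by auto
  define x where "x = i * b + k + 1"
  have xin: "x \<in> {1..(b+2)*b}" unfolding x_def using enc_in[OF i k] .
  have "pl b x = i" unfolding x_def pl_def using k by simp
  moreover have "ql b x = j" unfolding x_def ql_def Let_def using k i j unfolding k_def by auto
  ultimately show "\<exists>x\<in>{1..(b+2)*b}. pl b x = i \<and> ql b x = j" using xin by blast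
qed

lemma cell_uniq:
  fixes b :: nat assumes b0: "b > 0" and x: "x \<in> {1..(b+2)*b}" and y: "y \<in> {1..(b+2)*b}"
    and p: "pl b x = pl b y" and q: "ql b x = ql b y"
  shows "x = y"
proof -
  define i where "i = (x-1) div b"
  define k where "k = (x-1) mod b"
  define k' where "k' = (y-1) mod b"
  have dx: "x = i*b+k+1" "i < b+2" "k < b" using dec[OF b0 x] unfolding i_def k_def by auto
  have dy: "y = i*b+k'+1" "k' < b" using dec[OF b0 y] p unfolding pl_def i_def k'_def by auto
  have ey0: "(y-1) div b = i" using p unfolding pl_def i_def by simp
  have ex: "ql b x = (if i + k < b + 2 then i + k else i + k - (b + 2))"
    unfolding ql_def Let_def i_def k_def by (rule refl)
  have ey: "ql b y = (if (y-1) div b + k' < b + 2 then (y-1) div b + k' else (y-1) div b + k' - (b + 2))"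
    unfolding ql_def Let_def k'_def by (rule refl)
  have "(if i + k < b + 2 then i + k else i + k - (b + 2)) = (if i + k' < b + 2 then i + k' else i + k' - (b + 2))"
    using q[unfolded ex ey ey0] .
  then have "k = k'" using dx(2,3) dy(2) by (auto split: if_splits)
  then show ?thesis using dx dy by simp
qed

lemma cascade:
  fixes b :: nat and s :: "nat \<Rightarrow> nat"
  assumes b2: "b \<ge> 2" and sp: "s permutes {1..(b+2)*b}"
    and pP: "\<forall>x\<in>{1..(b+2)*b}. \<forall>y\<in>{1..(b+2)*b}. pl b (s x) = pl b (s y) \<longleftrightarrow> pl b x = pl b y"
    and pQ: "\<forall>x\<in>{1..(b+2)*b}. \<forall>y\<in>{1..(b+2)*b}. ql b (s x) = ql b (s y) \<longleftrightarrow> ql b x = ql b y"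
    and s1: "s 1 = 1"
  shows "s = id"
proof -
  define n where "n = (b+2)*b"
  define a where "a = b + 2"
  have b0: "b > 0" using b2 by simp
  have a4: "a \<ge> 4" using b2 unfolding a_def by simp
  note rv = rep_vals[OF b0]
  define sg where "sg = (\<lambda>i. pl b (s (i*b+1)))"
  define tu where "tu = (\<lambda>j. ql b (s (j*b+1)))"
  have sin: "\<And>x. x \<in> {1..(b+2)*b} \<Longrightarrow> s x \<in> {1..(b+2)*b}" using permutes_in_image[OF sp] by simp
  have hP: "\<And>x. x \<in> {1..(b+2)*b} \<Longrightarrow> pl b (s x) = sg (pl b x)"
  proof -
    fix x assume x: "x \<in> {1..(b+2)*b}"
    have i: "pl b x < b + 2" using pl_lt[OF b0 x] .
    show "pl b (s x) = sg (pl b x)" unfolding sg_def using pP x rv(3)[OF i] rv(1)[OF i] by metis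
  qed
  have hQ: "\<And>x. x \<in> {1..(b+2)*b} \<Longrightarrow> ql b (s x) = tu (ql b x)"
  proof -
    fix x assume x: "x \<in> {1..(b+2)*b}"
    have i: "ql b x < b + 2" using ql_lt[OF b0 x] .
    show "ql b (s x) = tu (ql b x)" unfolding tu_def using pQ x rv(3)[OF i] rv(2)[OF i] by metis
  qed
  have sglt: "\<And>i. i < a \<Longrightarrow> sg i < a" unfolding sg_def a_def using pl_lt[OF b0] sin rv(3) by blast
  have tult: "\<And>i. i < a \<Longrightarrow> tu i < a" unfolding tu_def a_def using ql_lt[OF b0] sin rv(3) by blast
  have sginj: "\<And>i i'. i < a \<Longrightarrow> i' < a \<Longrightarrow> sg i = sg i' \<Longrightarrow> i = i'"
  proof -
    fix i i' assume i: "i < a" and i': "i' < a" and e: "sg i = sg i'"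
    have "pl b (i*b+1) = pl b (i'*b+1)" using pP rv(3) i i' e unfolding sg_def a_def by blast
    then show "i = i'" using rv(1) i i' unfolding a_def by simp
  qed
  have tuinj: "\<And>i i'. i < a \<Longrightarrow> i' < a \<Longrightarrow> tu i = tu i' \<Longrightarrow> i = i'"
  proof -
    fix i i' assume i: "i < a" and i': "i' < a" and e: "tu i = tu i'"
    have "ql b (i*b+1) = ql b (i'*b+1)" using pQ rv(3) i i' e unfolding tu_def a_def by blast
    then show "i = i'" using rv(2) i i' unfolding a_def by simp
  qed
  have incp: "\<And>i j. i < a \<Longrightarrow> j < a \<Longrightarrow>
     (\<exists>x\<in>{1..(b+2)*b}. pl b x = sg i \<and> ql b x = tu j) \<longleftrightarrow> (\<exists>x\<in>{1..(b+2)*b}. pl b x = i \<and> ql b x = j)"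
  proof -
    fix i j assume i: "i < a" and j: "j < a"
    show "(\<exists>x\<in>{1..(b+2)*b}. pl b x = sg i \<and> ql b x = tu j) \<longleftrightarrow> (\<exists>x\<in>{1..(b+2)*b}. pl b x = i \<and> ql b x = j)"
    proof
      assume "\<exists>x\<in>{1..(b+2)*b}. pl b x = sg i \<and> ql b x = tu j"
      then obtain y where y: "y \<in> {1..(b+2)*b}" "pl b y = sg i" "ql b y = tu j" by blast
      define x where "x = inv s y"
      have sx: "s x = y" unfolding x_def using permutes_inverses(1)[OF sp] by simp
      have x: "x \<in> {1..(b+2)*b}" using y(1) sx sin permutes_in_image[OF sp] by (metis)
      have "sg (pl b x) = sg i" using hP[OF x] sx y(2) by simp
      then have "pl b x = i" using sginj pl_lt[OF b0 x] i unfolding a_def by blast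
      moreover have "tu (ql b x) = tu j" using hQ[OF x] sx y(3) by simp
      then have "ql b x = j" using tuinj ql_lt[OF b0 x] j unfolding a_def by blast
      ultimately show "\<exists>x\<in>{1..(b+2)*b}. pl b x = i \<and> ql b x = j" using x by blast
    next
      assume "\<exists>x\<in>{1..(b+2)*b}. pl b x = i \<and> ql b x = j"
      then obtain x where x: "x \<in> {1..(b+2)*b}" "pl b x = i" "ql b x = j" by blast
      then show "\<exists>x\<in>{1..(b+2)*b}. pl b x = sg i \<and> ql b x = tu j"
        using sin[OF x(1)] hP[OF x(1)] hQ[OF x(1)] by auto
    qed
  qed
  have mp: "\<And>i j. i < a \<Longrightarrow> j < a \<Longrightarrow> MM a (sg i) (tu j) \<longleftrightarrow> MM a i j"
  proof -
    fix i j assume i: "i < a" and j: "j < a"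
    have "MM a (sg i) (tu j) \<longleftrightarrow> \<not> (\<exists>x\<in>{1..(b+2)*b}. pl b x = sg i \<and> ql b x = tu j)"
      using inc_char[OF b0, of "sg i" "tu j"] sglt[OF i] tult[OF j] unfolding a_def by blast
    also have "\<dots> \<longleftrightarrow> \<not> (\<exists>x\<in>{1..(b+2)*b}. pl b x = i \<and> ql b x = j)" using incp[OF i j] by blast
    also have "\<dots> \<longleftrightarrow> MM a i j" using inc_char[OF b0, of i j] i j unfolding a_def by blast
    finally show "MM a (sg i) (tu j) \<longleftrightarrow> MM a i j" .
  qed
  have sg0: "sg 0 = 0" unfolding sg_def using s1 rv(1)[of 0] by simp
  have tu0: "tu 0 = 0" unfolding tu_def using s1 rv(2)[of 0] by simp
  have sg1: "sg 1 = 1"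
  proof -
    have m1: "MM a (sg 1) 0" using mp[of 1 0] a4 tu0 unfolding MM_def by simp
    have lt1: "sg 1 < a" using sglt a4 by simp
    define c where "c = tu (a - 1)"
    have clt: "c < a" unfolding c_def using tult a4 by simp
    have m2: "MM a 0 c" using mp[of 0 "a-1"] a4 sg0 unfolding c_def MM_def by auto
    have m3: "MM a (sg 1) c" using mp[of 1 "a-1"] a4 unfolding c_def MM_def by auto
    show "sg 1 = 1" using m1 m2 m3 lt1 clt a4 unfolding MM_def by auto
  qed
  have step: "\<And>i. 1 \<le> i \<Longrightarrow> i + 1 < a \<Longrightarrow> sg (i-1) = i-1 \<Longrightarrow> sg i = i \<Longrightarrow> sg (i+1) = i+1"
  proof -
    fix i assume i1: "1 \<le> i" and ia: "i + 1 < a" and h1: "sg (i-1) = i-1" and h2: "sg i = i"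
    define e where "e = tu (i-1)"
    have elt: "e < a" unfolding e_def using tult ia by simp
    have m1: "MM a i e" using mp[of i "i-1"] ia i1 h2 unfolding e_def MM_def by auto
    have m2: "\<not> MM a (i-1) e" using mp[of "i-1" "i-1"] ia i1 h1 a4 unfolding e_def MM_def by auto
    have ee: "e = i - 1" using m1 m2 elt i1 ia unfolding MM_def by auto
    have m3: "MM a (sg (i+1)) (i-1)" using mp[of "i+1" "i-1"] ia i1 ee unfolding e_def MM_def by auto
    have ne: "sg (i+1) \<noteq> i" using sginj[of "i+1" i] ia h2 by auto
    have lt: "sg (i+1) < a" using sglt ia by simp
    show "sg (i+1) = i+1" using m3 ne lt i1 ia unfolding MM_def by auto
  qed
  have Qi: "\<And>i. i + 1 < a \<Longrightarrow> sg i = i \<and> sg (i+1) = i+1"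
  proof -
    fix i show "i + 1 < a \<Longrightarrow> sg i = i \<and> sg (i+1) = i+1"
    proof (induction i)
      case 0 then show ?case using sg0 sg1 by simp
    next
      case (Suc i)
      then have h: "sg i = i" "sg (i+1) = i+1" by simp_all
      have "sg (Suc i + 1) = Suc i + 1" using step[of "Suc i"] Suc.prems h by simp
      then show ?case using h by simp
    qed
  qed
  have sgid: "\<And>i. i < a \<Longrightarrow> sg i = i"
  proof -
    fix i assume i: "i < a"
    show "sg i = i"
    proof (cases "i + 1 < a")
      case True then show ?thesis using Qi by blast
    next
      case False
      then have "i - 1 + 1 < a" "i = i - 1 + 1" using i a4 by auto
      then show ?thesis using Qi[of "i-1"] by metis
    qed
  qed
  have tuid: "\<And>j. j < a \<Longrightarrow> tu j = j"
  proof -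
    fix j assume j: "j < a"
    define r1 where "r1 = (if j + 1 < a then j + 1 else j + 1 - a)"
    define r2 where "r2 = (if j + 2 < a then j + 2 else j + 2 - a)"
    have r: "r1 < a" "r2 < a" "MM a r1 j" "MM a r2 j" unfolding r1_def r2_def MM_def using j a4 by auto
    have m1: "MM a r1 (tu j)" using mp[OF r(1) j] r(3) sgid[OF r(1)] by simp
    have m2: "MM a r2 (tu j)" using mp[OF r(2) j] r(4) sgid[OF r(2)] by simp
    have "tu j < a" using tult j by simp
    then show "tu j = j" using m1 m2 j a4 unfolding MM_def r1_def r2_def by (auto split: if_splits)
  qed
  show "s = id"
  proof
    fix x show "s x = id x"
    proof (cases "x \<in> {1..(b+2)*b}")
      case True
      have "pl b (s x) = pl b x" using hP[OF True] sgid pl_lt[OF b0 True] unfolding a_def by simp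
      moreover have "ql b (s x) = ql b x" using hQ[OF True] tuid ql_lt[OF b0 True] unfolding a_def by simp
      ultimately show ?thesis using cell_uniq[OF b0 sin[OF True] True] by simp
    next
      case False then show ?thesis using permutes_not_in[OF sp] by simp
    qed
  qed
qed


lemma card_inv2:
  assumes sp: "s permutes S"
    and p1: "\<forall>x\<in>S. \<forall>y\<in>S. L1 (s x) = L1 (s y) \<longleftrightarrow> L1 x = L1 y"
    and p2: "\<forall>x\<in>S. \<forall>y\<in>S. L2 (s x) = L2 (s y) \<longleftrightarrow> L2 x = L2 y"
    and x: "x \<in> S"
  shows "card {y\<in>S. L1 y = L1 (s x) \<and> L2 y = L2 (s x)} = card {y\<in>S. L1 y = L1 x \<and> L2 y = L2 x}"
proof -
  have sin: "\<And>y. s y \<in> S \<longleftrightarrow> y \<in> S" using permutes_in_image[OF sp] by simp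
  have "s ` {y\<in>S. L1 y = L1 x \<and> L2 y = L2 x} = {y\<in>S. L1 y = L1 (s x) \<and> L2 y = L2 (s x)}"
  proof (intro set_eqI iffI)
    fix z assume "z \<in> s ` {y\<in>S. L1 y = L1 x \<and> L2 y = L2 x}"
    then obtain y where y: "y \<in> S" "L1 y = L1 x" "L2 y = L2 x" "z = s y" by blast
    then show "z \<in> {y\<in>S. L1 y = L1 (s x) \<and> L2 y = L2 (s x)}" using p1 p2 x sin by auto
  next
    fix z assume z: "z \<in> {y\<in>S. L1 y = L1 (s x) \<and> L2 y = L2 (s x)}"
    define y where "y = inv s z"
    have sy: "s y = z" unfolding y_def using permutes_inverses(1)[OF sp] by simp
    have y: "y \<in> S" using z sy sin by auto
    have "L1 y = L1 x" "L2 y = L2 x" using p1 p2 x y z sy by auto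
    then show "z \<in> s ` {y\<in>S. L1 y = L1 x \<and> L2 y = L2 x}" using y sy by blast
  qed
  moreover have "inj_on s {y\<in>S. L1 y = L1 x \<and> L2 y = L2 x}"
    using permutes_inj[OF sp] by (rule inj_on_subset[OF _ subset_UNIV])
  then have "card (s ` {y\<in>S. L1 y = L1 x \<and> L2 y = L2 x}) = card {y\<in>S. L1 y = L1 x \<and> L2 y = L2 x}"
    by (rule card_image)
  ultimately show ?thesis by simp
qed

lemma divmodI:
  fixes m b q :: nat
  assumes "b * q \<le> m" "m < b * q + b"
  shows "m div b = q" "m mod b = m - b * q"
proof -
  show d: "m div b = q" using assms by (intro div_nat_eqI) auto
  show "m mod b = m - b * q" using d by (metis minus_div_mult_eq_mod mult.commute)
qed

lemma fix1_big:
  fixes b :: nat and s :: "nat \<Rightarrow> nat"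
  assumes b3: "b \<ge> 3" and sp: "s permutes {1..(b+2)*b}"
    and pP: "\<forall>x\<in>{1..(b+2)*b}. \<forall>y\<in>{1..(b+2)*b}. pl b (s x) = pl b (s y) \<longleftrightarrow> pl b x = pl b y"
    and pQ: "\<forall>x\<in>{1..(b+2)*b}. \<forall>y\<in>{1..(b+2)*b}. ql b (s x) = ql b (s y) \<longleftrightarrow> ql b x = ql b y"
    and pR: "\<forall>x\<in>{1..(b+2)*b}. \<forall>y\<in>{1..(b+2)*b}. rl b (s x) = rl b (s y) \<longleftrightarrow> rl b x = rl b y"
  shows "s 1 = 1"
proof -
  define S where "S = {1..(b+2)*b}"
  have b2: "b \<ge> 2" and b0: "b > 0" using b3 by auto
  have h: "(b+2)*b = b*b + 2*b" "2*b \<le> b*b" using nb[OF b2] by auto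
  have h3: "3*b \<le> b*b" using b3 by (simp add: mult_le_mono1)
  note pv = pl_vals[OF b2] and mv = mem_vals[OF b2]
  have one: "1 \<in> S" using mv unfolding S_def by simp
  define z where "z = s 1"
  have zS: "z \<in> S" unfolding z_def S_def using one permutes_in_image[OF sp] unfolding S_def by simp
  have c1: "card {y\<in>S. pl b y = pl b z \<and> rl b y = rl b z} = card {y\<in>S. pl b y = pl b 1 \<and> rl b y = rl b 1}"
    unfolding z_def using card_inv2[OF sp pP pR] one unfolding S_def by blast
  have c2: "card {y\<in>S. ql b y = ql b z \<and> rl b y = rl b z} = card {y\<in>S. ql b y = ql b 1 \<and> rl b y = rl b 1}"
    unfolding z_def using card_inv2[OF sp pQ pR] one unfolding S_def by blast
  have rl1: "rl b 1 = 2" unfolding rl_def by simp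
  have ql1: "ql b 1 = 0" unfolding ql_def Let_def by simp
  have e1: "{y\<in>S. pl b y = pl b 1 \<and> rl b y = rl b 1} = {1}"
    using pv one unfolding rl1 by (auto simp: rl_pl)
  have qlrow2: "\<And>y. y \<in> S \<Longrightarrow> pl b y = 2 \<Longrightarrow> ql b y \<noteq> 0"
  proof -
    fix y assume y: "y \<in> S" and p: "pl b y = 2"
    have "(y-1) mod b < b" using b0 by simp
    then show "ql b y \<noteq> 0" using p unfolding ql_def Let_def pl_def by auto
  qed
  have e2: "{y\<in>S. ql b y = ql b 1 \<and> rl b y = rl b 1} = {1}"
  proof (intro set_eqI iffI)
    fix y assume y: "y \<in> {y\<in>S. ql b y = ql b 1 \<and> rl b y = rl b 1}"
    show "y \<in> {1}"
    proof (rule ccontr)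
      assume "y \<notin> {1}"
      then have p2: "pl b y = 2" using y unfolding rl1 by (auto simp: rl_pl split: if_splits)
      have yS: "y \<in> S" and q0: "ql b y = 0" using y ql1 by auto
      show False using qlrow2[OF yS p2] q0 by simp
    qed
  next
    fix y :: nat assume "y \<in> {1}" then show "y \<in> {y\<in>S. ql b y = ql b 1 \<and> rl b y = rl b 1}" using one by simp
  qed
  have fin: "\<And>P. finite {y\<in>S. P y}" unfolding S_def by simp
  show "s 1 = 1"
  proof (rule ccontr)
    assume "s 1 \<noteq> 1"
    then have z1: "z \<noteq> 1" unfolding z_def .
    show False
    proof (cases "z = b + 1")
      case True
      have d2: "pl b 2 = 0" "(2 - 1) mod b = 1" using pv b2 by auto
      have q2: "ql b 2 = 1" unfolding ql_def Let_def using d2 unfolding pl_def by simp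
      have "ql b (1*b+1) = 1" by (rule rep_vals(2)[OF b0]) simp
      then have qz: "ql b z = 1" using True by simp
      have rz: "rl b z = 0" using True b0 unfolding rl_def by simp
      have r2: "rl b 2 = 0" using b3 d2(1) by (simp add: rl_pl)
      have "{z, 2} \<subseteq> {y\<in>S. ql b y = ql b z \<and> rl b y = rl b z}" using zS mv q2 qz rz r2 unfolding S_def by auto
      moreover have "card {z, 2} = 2" using True b3 by simp
      ultimately have "2 \<le> card {y\<in>S. ql b y = ql b z \<and> rl b y = rl b z}" by (metis card_mono fin)
      then show False using c2 e2 by simp
    next
      case nb1: False
      show False
      proof (cases "z = 2*b+2")
        case True
        have dz: "(z-1) div b = 2" "(z-1) mod b = 1" using True b2 divmodI[of b 2 "2*b+1"] by auto
        have qz: "ql b z = 3" unfolding ql_def Let_def using dz b2 by simp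
        have rz: "rl b z = 1" using True b2 unfolding rl_def by simp
        have dw: "(b+3-1) div b = 1" "(b+3-1) mod b = 2" using b3 divmodI[of b 1 "b+2"] by auto
        have qw: "ql b (b+3) = 3" unfolding ql_def Let_def using dw b2 by simp
        have rw: "rl b (b+3) = 1" using dw b3 unfolding rl_def by simp
        have wS: "b + 3 \<in> S" unfolding S_def atLeastAtMost_iff h(1) using h3 b3 by linarith
        have "{z, b+3} \<subseteq> {y\<in>S. ql b y = ql b z \<and> rl b y = rl b z}" using zS wS qz rz qw rw by auto
        moreover have "card {z, b+3} = 2" using True b3 by simp
        ultimately have "2 \<le> card {y\<in>S. ql b y = ql b z \<and> rl b y = rl b z}" by (metis card_mono fin)
        then show False using c2 e2 by simp
      next
        case nb2: False
        define i where "i = pl b z"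
        define Row where "Row = {y\<in>S. pl b y = i}"
        define M where "M = {1, b+1, 2*b+2::nat}"
        have rz: "rl b z = i" using z1 nb1 nb2 unfolding i_def by (simp add: rl_pl)
        have ilt: "i < b + 2" unfolding i_def using pl_lt[OF b0] zS unfolding S_def by simp
        have cR: "card Row = b" unfolding Row_def S_def using card_row[OF b0 ilt] .
        have sub: "Row - M \<subseteq> {y\<in>S. pl b y = pl b z \<and> rl b y = rl b z}"
          unfolding Row_def M_def using rz by (auto simp: rl_pl i_def)
        have "card (Row \<inter> M) \<le> 1"
        proof -
          have "\<forall>u\<in>Row \<inter> M. \<forall>v\<in>Row \<inter> M. u = v" unfolding Row_def M_def using pv by auto
          moreover have fRM: "finite (Row \<inter> M)" unfolding M_def by simp
          ultimately have "card (Row \<inter> M) \<le> Suc 0" using card_le_Suc0_iff_eq[OF fRM] by blast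
          then show ?thesis by simp
        qed
        moreover have "card (Row - M) = card Row - card (Row \<inter> M)"
          by (rule card_Diff_subset_Int) (simp add: M_def)
        ultimately have "card (Row - M) \<ge> 2" using cR b3 by linarith
        then have "2 \<le> card {y\<in>S. pl b y = pl b z \<and> rl b y = rl b z}"
          using card_mono[OF fin sub] by linarith
        then show False using c1 e1 by simp
      qed
    qed
  qed
qed

lemma partner:
  assumes sp: "s permutes S" and p: "\<forall>x\<in>S. \<forall>y\<in>S. L (s x) = L (s y) \<longleftrightarrow> L x = L y"
    and cls: "\<forall>u\<in>S. \<forall>w\<in>S. L w = L u \<longrightarrow> w = u \<or> w = f u"
    and x: "x \<in> S" and y: "y \<in> S" and ne: "x \<noteq> y" and e: "L x = L y"
  shows "s y = f (s x)"
proof -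
  have sx: "s x \<in> S" and sy: "s y \<in> S" using permutes_in_image[OF sp] x y by auto
  have "L (s y) = L (s x)" using p x y e by metis
  moreover have "s y \<noteq> s x" using permutes_inj[OF sp] ne by (metis injD)
  ultimately show ?thesis using cls sx sy by blast
qed

lemma set8: "{1..(2+2)*2::nat} = {1,2,3,4,5,6,7,8}"
  by auto

definition fP :: "nat \<Rightarrow> nat" where "fP u = (if odd u then u + 1 else u - 1)"
definition fQ :: "nat \<Rightarrow> nat" where
  "fQ u = (if u = 1 then 8 else if u = 8 then 1 else if even u then u + 1 else u - 1)"
definition fR :: "nat \<Rightarrow> nat" where
  "fR u = (if u = 1 then 5 else if u = 5 then 1 else if u = 2 then 3 else if u = 3 then 2
     else if u = 4 then 6 else if u = 6 then 4 else if u = 7 then 8 else 7)"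

lemma clsP: "\<forall>u\<in>{1..(2+2)*2}. \<forall>w\<in>{1..(2+2)*2}. pl 2 w = pl 2 u \<longrightarrow> w = u \<or> w = fP u"
  unfolding set8 by (simp add: pl_def fP_def)
lemma clsQ: "\<forall>u\<in>{1..(2+2)*2}. \<forall>w\<in>{1..(2+2)*2}. ql 2 w = ql 2 u \<longrightarrow> w = u \<or> w = fQ u"
  unfolding set8 by (simp add: ql_def Let_def fQ_def)
lemma clsR: "\<forall>u\<in>{1..(2+2)*2}. \<forall>w\<in>{1..(2+2)*2}. rl 2 w = rl 2 u \<longrightarrow> w = u \<or> w = fR u"
  unfolding set8 by (simp add: rl_def fR_def)

lemma fix1_small:
  fixes s :: "nat \<Rightarrow> nat"
  assumes sp: "s permutes {1..(2+2)*2}"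
    and pP: "\<forall>x\<in>{1..(2+2)*2}. \<forall>y\<in>{1..(2+2)*2}. pl 2 (s x) = pl 2 (s y) \<longleftrightarrow> pl 2 x = pl 2 y"
    and pQ: "\<forall>x\<in>{1..(2+2)*2}. \<forall>y\<in>{1..(2+2)*2}. ql 2 (s x) = ql 2 (s y) \<longleftrightarrow> ql 2 x = ql 2 y"
    and pR: "\<forall>x\<in>{1..(2+2)*2}. \<forall>y\<in>{1..(2+2)*2}. rl 2 (s x) = rl 2 (s y) \<longleftrightarrow> rl 2 x = rl 2 y"
  shows "s 1 = 1"
proof -
  note PP = partner[OF sp pP clsP] and QQ = partner[OF sp pQ clsQ] and RR = partner[OF sp pR clsR]
  have m: "(1::nat) \<in> {1..(2+2)*2}" "(2::nat) \<in> {1..(2+2)*2}" "(3::nat) \<in> {1..(2+2)*2}"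
     "(7::nat) \<in> {1..(2+2)*2}" "(8::nat) \<in> {1..(2+2)*2}" by auto
  have a1: "s 2 = fP (s 1)" by (rule PP[OF m(1) m(2)]) (simp_all add: pl_def)
  have a2: "s 3 = fQ (s 2)" by (rule QQ[OF m(2) m(3)]) (simp_all add: ql_def)
  have a3: "s 2 = fR (s 3)" by (rule RR[OF m(3) m(2)]) (simp_all add: rl_def)
  have a4: "s 1 = fP (s 2)" by (rule PP[OF m(2) m(1)]) (simp_all add: pl_def)
  have b1: "s 8 = fQ (s 1)" by (rule QQ[OF m(1) m(5)]) (simp_all add: ql_def)
  have b2: "s 7 = fP (s 8)" by (rule PP[OF m(5) m(4)]) (simp_all add: pl_def)
  have b3: "s 8 = fR (s 7)" by (rule RR[OF m(4) m(5)]) (simp_all add: rl_def)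
  have b4: "s 1 = fQ (s 8)" by (rule QQ[OF m(5) m(1)]) (simp_all add: ql_def)
  define v where "v = s 1"
  have w1: "v = fP (fR (fQ (fP v)))" unfolding v_def using a1 a2 a3 a4 by metis
  have w2: "v = fQ (fR (fP (fQ v)))" unfolding v_def using b1 b2 b3 b4 by metis
  have "v \<in> {1..(2+2)*2}" unfolding v_def using permutes_in_image[OF sp] m(1) by simp
  then have "v \<in> {1,2,3,4,5,6,7,8}" unfolding set8 .
  then show "s 1 = 1" using w1 w2 unfolding v_def[symmetric] by (auto simp: fP_def fQ_def fR_def)
qed


lemma le2_cover:
  assumes "finite S" "card S < 3" "P0 \<in> X" "\<forall>P\<in>S. P \<in> X"
  shows "\<exists>P Q. P \<in> X \<and> Q \<in> X \<and> S \<subseteq> {P, Q}"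
proof -
  have "card S = 0 \<or> card S = 1 \<or> card S = 2" using assms(2) by arith
  then show ?thesis
  proof (elim disjE)
    assume "card S = 0" then have "S = {}" using assms(1) by simp
    then show ?thesis using assms(3) by blast
  next
    assume "card S = 1" then obtain P where "S = {P}" by (meson card_1_singletonE)
    then show ?thesis using assms(4) by blast
  next
    assume "card S = 2" then obtain P Q where "S = {P, Q}" by (meson card_2_iff)
    then show ?thesis using assms(4) by blast
  qed
qed

theorem proposition2p4:
  fixes n a b :: nat
  assumes "n = a * b" and "a = b + 2" and "b \<ge> 2"
  shows "base_size n a b = 3"
proof -
  have b2: "b \<ge> 2" using assms(3) .
  have b0: "b > 0" using b2 by simp
  have nn: "n = (b+2)*b" using assms(1,2) by simp
  have aa: "a = b + 2" using assms(2) .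
  define Pp where "Pp = blocks n a (pl b)"
  define Qq where "Qq = blocks n a (ql b)"
  define Rr where "Rr = blocks n a (rl b)"
  have bP: "block_partition n a b Pp" unfolding Pp_def nn aa using bpP[OF b2] .
  have bQ: "block_partition n a b Qq" unfolding Qq_def nn aa using bpQ[OF b2] .
  have bR: "block_partition n a b Rr" unfolding Rr_def nn aa using bpR[OF b2] .
  note pv = pl_vals[OF b2] and mv = mem_vals[OF b2]
  have h: "(b+2)*b = b*b + 2*b" "2*b \<le> b*b" using nb[OF b2] by auto
  define row0 where "row0 = {x\<in>{1..n}. pl b x = 0}"
  have r0P: "row0 \<in> Pp" unfolding row0_def Pp_def blocks_def using aa by auto
  have r0: "1 \<in> row0" "2 \<in> row0" unfolding row0_def nn using pv mv by auto
  have ql12: "ql b 1 = 0" "ql b 2 = 1"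
  proof -
    show "ql b 1 = 0" unfolding ql_def Let_def by simp
    have "(2 - 1) div b = 0" "(2 - 1) mod b = 1" using b2 by auto
    then show "ql b 2 = 1" unfolding ql_def Let_def by simp
  qed
  have rl12: "rl b 1 = 2" "rl b 2 = 0" using b2 pv by (auto simp: rl_pl)
  have PQ: "Pp \<noteq> Qq"
  proof
    assume "Pp = Qq"
    then have "row0 \<in> Qq" using r0P by simp
    then have "ql b 1 = ql b 2" unfolding Qq_def using blocks_same r0 by blast
    then show False using ql12 by simp
  qed
  have PR: "Pp \<noteq> Rr"
  proof
    assume "Pp = Rr"
    then have "row0 \<in> Rr" using r0P by simp
    then have "rl b 1 = rl b 2" unfolding Rr_def using blocks_same r0 by blast
    then show False using rl12 by simp
  qed
  define R3 where "R3 = {x\<in>{1..n}. rl b x = 3}"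
  have R3R: "R3 \<in> Rr" unfolding R3_def Rr_def blocks_def using aa b2 by auto
  have m3: "3*b+1 \<in> {1..n}" "3*b+2 \<in> {1..n}" unfolding nn atLeastAtMost_iff h(1) using h(2) b2 by linarith+
  have d31: "(3*b+1-1) div b = 3" "(3*b+1-1) mod b = 0" using b0 by simp_all
  have d32: "(3*b+2-1) div b = 3" "(3*b+2-1) mod b = 1" using b2 divmodI[of b 3 "3*b+1"] by auto
  have r3: "3*b+1 \<in> R3" "3*b+2 \<in> R3" unfolding R3_def using m3 d31 d32 b2 by (auto simp: rl_def)
  have q3: "ql b (3*b+1) = 3" "ql b (3*b+2) \<noteq> 3" unfolding ql_def Let_def using d31 d32 b2 by auto
  have QR: "Qq \<noteq> Rr"
  proof
    assume "Qq = Rr"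
    then have "R3 \<in> Qq" using R3R by simp
    then have "ql b (3*b+1) = ql b (3*b+2)" unfolding Qq_def using blocks_same r3 by blast
    then show False using q3 by simp
  qed
  define Phi where "Phi = (\<lambda>k. \<exists>S. finite S \<and> card S = k \<and> (\<forall>P\<in>S. block_partition n a b P) \<and>
       (\<forall>s. s permutes {1..n} \<and> (\<forall>P\<in>S. stabilises s P) \<longrightarrow> s = id))"
  have Phi3: "Phi 3"
  proof -
    have triv: "\<forall>s. s permutes {1..n} \<and> (\<forall>P\<in>{Pp, Qq, Rr}. stabilises s P) \<longrightarrow> s = id"
    proof (intro allI impI)
      fix s assume "s permutes {1..n} \<and> (\<forall>P\<in>{Pp, Qq, Rr}. stabilises s P)"
      then have sp: "s permutes {1..(b+2)*b}" and stP: "stabilises s (blocks ((b+2)*b) (b+2) (pl b))"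
        and stQ: "stabilises s (blocks ((b+2)*b) (b+2) (ql b))"
        and stR: "stabilises s (blocks ((b+2)*b) (b+2) (rl b))"
        unfolding Pp_def Qq_def Rr_def nn aa by auto
      have pP: "\<forall>x\<in>{1..(b+2)*b}. \<forall>y\<in>{1..(b+2)*b}. pl b (s x) = pl b (s y) \<longleftrightarrow> pl b x = pl b y"
        using stab_pres[OF sp stP] pl_lt[OF b0] by blast
      have pQ: "\<forall>x\<in>{1..(b+2)*b}. \<forall>y\<in>{1..(b+2)*b}. ql b (s x) = ql b (s y) \<longleftrightarrow> ql b x = ql b y"
        using stab_pres[OF sp stQ] ql_lt[OF b0] by blast
      have pR: "\<forall>x\<in>{1..(b+2)*b}. \<forall>y\<in>{1..(b+2)*b}. rl b (s x) = rl b (s y) \<longleftrightarrow> rl b x = rl b y"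
        using stab_pres[OF sp stR] rl_lt[OF b0] by blast
      have s1: "s 1 = 1"
      proof (cases "b = 2")
        case True
        show ?thesis by (rule fix1_small[OF sp[unfolded True] pP[unfolded True] pQ[unfolded True] pR[unfolded True]])
      next
        case False
        then have "b \<ge> 3" using b2 by simp
        then show ?thesis by (rule fix1_big[OF _ sp pP pQ pR])
      qed
      show "s = id" by (rule cascade[OF b2 sp pP pQ s1])
    qed
    have "card {Pp, Qq, Rr} = 3" using PQ PR QR by simp
    then show ?thesis unfolding Phi_def using bP bQ bR triv by (intro exI[of _ "{Pp, Qq, Rr}"]) auto
  qed
  have low: "\<And>k. Phi k \<Longrightarrow> 3 \<le> k"
  proof (rule ccontr)
    fix k assume "Phi k" and "\<not> 3 \<le> k"
    then obtain S where S: "finite S" "card S = k" "\<forall>P\<in>S. block_partition n a b P"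
      "\<forall>s. s permutes {1..n} \<and> (\<forall>P\<in>S. stabilises s P) \<longrightarrow> s = id" unfolding Phi_def by blast
    have "card S < 3" using S(2) \<open>\<not> 3 \<le> k\<close> by simp
    then have "\<exists>P Q. P \<in> {X. block_partition n a b X} \<and> Q \<in> {X. block_partition n a b X} \<and> S \<subseteq> {P, Q}"
      by (rule le2_cover[OF S(1)]) (use bP S(3) in auto)
    then obtain P Q where PQ': "block_partition n a b P" "block_partition n a b Q" "S \<subseteq> {P, Q}"
      by blast
    obtain s where s: "s permutes {1..n}" "stabilises s P" "stabilises s Q" "s \<noteq> id"
      using lower[OF PQ'(1,2) aa] by blast
    have "\<forall>X\<in>S. stabilises s X" using s(2,3) PQ'(3) by auto
    then show False using S(4) s(1,4) by blast
  qed
  have "base_size n a b = (LEAST k. Phi k)" unfolding base_size_def Phi_def by simp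
  also have "\<dots> = 3" by (rule Least_equality[where P=Phi, OF Phi3 low])
  finally show ?thesis .
qed


end
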